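(* Let $1\le s<t$ be integers and let $n$ be sufficiently large. If $G$ is a $K_{s,t}$-saturated $n$ by $n$ bipartite graph with minimum degree $\delta<t-1$, then $G$ has at least $(s+t-2)n-(t-1)(t-2)$ edges.
   Context: An $n$ by $n$ bipartite graph $G$ has two color classes $U,U'$ with $|U|=|U'|=n$. Such a $G$ is called $K_{s,t}$-saturated if $G$ contains no subgraph isomorphic to $K_{s,t}$ (with either side of $K_{s,t}$ lying in either class), but adding any missing edge $uu'$ with $u\in U$, $u'\in U'$ creates a subgraph isomorphic to $K_{s,t}$ (with either orientation). *)

theory Defs
  imports Main
begin

text \<open>An n by n bipartite graph: colour classes U = {0..<n} and U' = {0..<n}
  (two disjoint copies), edges E a subset of U \<times> U'; the pair (u,u') is the edge
  between u \<in> U and u' \<in> U'.\<close>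

definition bip_graph :: "nat \<Rightarrow> (nat \<times> nat) set \<Rightarrow> bool" where
  "bip_graph n E \<longleftrightarrow> E \<subseteq> {0..<n} \<times> {0..<n}"

definition contains_Kst :: "nat \<Rightarrow> nat \<Rightarrow> nat \<Rightarrow> (nat \<times> nat) set \<Rightarrow> bool" where
  "contains_Kst n s t E \<longleftrightarrow>
     (\<exists>A B. A \<subseteq> {0..<n} \<and> B \<subseteq> {0..<n} \<and> A \<times> B \<subseteq> E \<and>
        ((card A = s \<and> card B = t) \<or> (card A = t \<and> card B = s)))"

definition Kst_saturated :: "nat \<Rightarrow> nat \<Rightarrow> nat \<Rightarrow> (nat \<times> nat) set \<Rightarrow> bool" where
  "Kst_saturated n s t E \<longleftrightarrow> bip_graph n E \<and> \<not> contains_Kst n s t E \<and>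
     (\<forall>u\<in>{0..<n}. \<forall>u'\<in>{0..<n}. (u, u') \<notin> E \<longrightarrow> contains_Kst n s t (insert (u, u') E))"

definition deg_left :: "nat \<Rightarrow> (nat \<times> nat) set \<Rightarrow> nat \<Rightarrow> nat" where
  "deg_left n E u = card {u' \<in> {0..<n}. (u, u') \<in> E}"

definition deg_right :: "nat \<Rightarrow> (nat \<times> nat) set \<Rightarrow> nat \<Rightarrow> nat" where
  "deg_right n E u' = card {u \<in> {0..<n}. (u, u') \<in> E}"

definition min_degree :: "nat \<Rightarrow> (nat \<times> nat) set \<Rightarrow> nat" where
  "min_degree n E = Min (deg_left n E ` {0..<n} \<union> deg_right n E ` {0..<n})"

end

theory Submission
  imports Defs
begin

lemma card_pairs_left:
  assumes "finite A" "finite B"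
  shows "card (E \<inter> (A \<times> B)) = (\<Sum>a\<in>A. card {b\<in>B. (a,b)\<in>E})"
proof -
  have "E \<inter> (A \<times> B) = Sigma A (\<lambda>a. {b\<in>B. (a,b)\<in>E})" by auto
  then show ?thesis using assms by (simp add: card_SigmaI)
qed

lemma card_pairs_right:
  assumes "finite A" "finite B"
  shows "card (E \<inter> (A \<times> B)) = (\<Sum>b\<in>B. card {a\<in>A. (a,b)\<in>E})"
proof -
  have "E \<inter> (A \<times> B) = (E\<inverse> \<inter> (B \<times> A))\<inverse>" by auto
  then have "card (E \<inter> (A \<times> B)) = card (E\<inverse> \<inter> (B \<times> A))"
    by (simp only: card_inverse)
  also have "\<dots> = (\<Sum>b\<in>B. card {a\<in>A. (b,a)\<in>E\<inverse>})"
    by (rule card_pairs_left[OF assms(2) assms(1)])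
  finally show ?thesis by simp
qed

lemma all_deg:
  assumes sat: "Kst_saturated n s t E" and "s < t" and "w < n" and "s \<le> n"
  shows "s - 1 \<le> deg_left n E w"
proof (cases "\<forall>y<n. (w,y) \<in> E")
  case True
  then have "{u'\<in>{0..<n}. (w,u')\<in>E} = {0..<n}" by auto
  then show ?thesis using assms unfolding deg_left_def by simp
next
  case False
  then obtain y where y: "y < n" "(w,y) \<notin> E" by auto
  then have "contains_Kst n s t (insert (w,y) E)" using sat assms(3)
    unfolding Kst_saturated_def by auto
  then obtain A B where AB: "A \<subseteq> {0..<n}" "B \<subseteq> {0..<n}" "A \<times> B \<subseteq> insert (w,y) E"
    "(card A = s \<and> card B = t) \<or> (card A = t \<and> card B = s)"
    unfolding contains_Kst_def by blast
  have "(w,y) \<in> A \<times> B"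
  proof (rule ccontr)
    assume "(w,y) \<notin> A \<times> B"
    then have "A \<times> B \<subseteq> E" using AB by auto
    then have "contains_Kst n s t E" using AB unfolding contains_Kst_def by blast
    then show False using sat unfolding Kst_saturated_def by auto
  qed
  then have wy: "w \<in> A" "y \<in> B" by auto
  have sub: "B - {y} \<subseteq> {u'\<in>{0..<n}. (w,u')\<in>E}"
  proof
    fix b assume b: "b \<in> B - {y}"
    then have "(w,b) \<in> insert (w,y) E" using AB(3) wy by blast
    then show "b \<in> {u'\<in>{0..<n}. (w,u')\<in>E}" using b AB(2) by auto
  qed
  have fB: "finite B" using AB(2) finite_subset by blast
  have "card B \<ge> s" using AB assms(2) by auto
  then have "s - 1 \<le> card (B - {y})" using wy fB by simp
  also have "\<dots> \<le> card {u'\<in>{0..<n}. (w,u')\<in>E}" using sub by (intro card_mono) auto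
  finally show ?thesis unfolding deg_left_def .
qed

lemma main_left:
  assumes sat: "Kst_saturated n s t E" and s1: "1 \<le> s" and st: "s < t" and vn: "v < n"
    and dv: "deg_left n E v \<le> t - 2" and tn: "t \<le> n"
  shows "(s + t - 2) * n \<le> card E + (t - 1) * (t - 2)"
proof -
  define U where "U = {0..<n}"
  define Nv where "Nv = {y\<in>U. (v,y)\<in>E}"
  define X where "X = U - Nv"
  define f where "f w = card {y\<in>Nv. (w,y)\<in>E}" for w
  define D where "D = {w\<in>U. f w < s - 1}"
  have fin: "finite U" "finite Nv" "finite X" "finite D" "finite (U - D)"
    unfolding U_def Nv_def X_def D_def by auto
  have EU: "E \<subseteq> U \<times> U" using sat unfolding Kst_saturated_def bip_graph_def U_def by auto
  have dNv: "card Nv = deg_left n E v" unfolding Nv_def U_def deg_left_def by simp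
  have NvU: "Nv \<subseteq> U" unfolding Nv_def by auto
  have cX: "card X = n - card Nv" unfolding X_def using NvU fin
    by (simp add: card_Diff_subset U_def)
  have a: "t - 1 \<le> card {w\<in>U-D. (w,u')\<in>E}" if u: "u' \<in> X" for u'
  proof -
    have u': "u' < n" "(v,u') \<notin> E" using u unfolding X_def Nv_def U_def by auto
    then have "contains_Kst n s t (insert (v,u') E)" using sat vn
      unfolding Kst_saturated_def by auto
    then obtain A B where AB: "A \<subseteq> {0..<n}" "B \<subseteq> {0..<n}" "A \<times> B \<subseteq> insert (v,u') E"
      "(card A = s \<and> card B = t) \<or> (card A = t \<and> card B = s)"
      unfolding contains_Kst_def by blast
    have "(v,u') \<in> A \<times> B"
    proof (rule ccontr)
      assume "(v,u') \<notin> A \<times> B"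
      then have "A \<times> B \<subseteq> E" using AB by auto
      then have "contains_Kst n s t E" using AB unfolding contains_Kst_def by blast
      then show False using sat unfolding Kst_saturated_def by auto
    qed
    then have vu: "v \<in> A" "u' \<in> B" by auto
    have fA: "finite A" using AB(1) finite_subset by blast
    have fB: "finite B" using AB(2) finite_subset by blast
    have BN: "B - {u'} \<subseteq> Nv" using AB vu unfolding Nv_def U_def by auto
    have "card (B - {u'}) \<le> card Nv" using BN fin by (simp add: card_mono)
    then have "card B - 1 \<le> t - 2" using vu fB dNv dv by simp
    then have "card B \<noteq> t" using st s1 by auto
    then have cA: "card A = t" and cB: "card B = s" using AB(4) by auto
    have "A - {v} \<subseteq> {w\<in>U-D. (w,u')\<in>E}"
    proof
      fix a assume a: "a \<in> A - {v}"
      have aE: "(a,u') \<in> E" using a AB(3) vu by auto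
      have "B - {u'} \<subseteq> {y\<in>Nv. (a,y)\<in>E}" using BN a AB(3) by auto
      then have "card (B - {u'}) \<le> f a" unfolding f_def using fin
        by (intro card_mono) auto
      then have "s - 1 \<le> f a" using cB vu fB by simp
      then show "a \<in> {w\<in>U-D. (w,u')\<in>E}" using a aE AB(1) unfolding D_def U_def by auto
    qed
    then have "card (A - {v}) \<le> card {w\<in>U-D. (w,u')\<in>E}" using fin
      by (intro card_mono) auto
    then show ?thesis using cA vu fA by simp
  qed
  have partE: "E = (E \<inter> ((U - D) \<times> X)) \<union> ((E \<inter> (D \<times> U)) \<union> (E \<inter> ((U - D) \<times> Nv)))"
    using EU unfolding X_def D_def by auto
  have cE: "card E = card (E \<inter> ((U - D) \<times> X)) + (card (E \<inter> (D \<times> U)) + card (E \<inter> ((U - D) \<times> Nv)))"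
  proof -
    have f1: "finite (E \<inter> (D \<times> U))" "finite (E \<inter> ((U - D) \<times> Nv))" "finite (E \<inter> ((U - D) \<times> X))"
      using fin by auto
    have "card ((E \<inter> (D \<times> U)) \<union> (E \<inter> ((U - D) \<times> Nv))) = card (E \<inter> (D \<times> U)) + card (E \<inter> ((U - D) \<times> Nv))"
      using f1 by (intro card_Un_disjoint) auto
    moreover have "card ((E \<inter> ((U - D) \<times> X)) \<union> ((E \<inter> (D \<times> U)) \<union> (E \<inter> ((U - D) \<times> Nv))))
       = card (E \<inter> ((U - D) \<times> X)) + card ((E \<inter> (D \<times> U)) \<union> (E \<inter> ((U - D) \<times> Nv)))"
      using f1 unfolding X_def by (intro card_Un_disjoint) auto
    ultimately show ?thesis using partE by simp
  qed
  have ca: "(t - 1) * card X \<le> card (E \<inter> ((U - D) \<times> X))"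
  proof -
    have "(t - 1) * card X = (\<Sum>u'\<in>X. t - 1)" by simp
    also have "\<dots> \<le> (\<Sum>u'\<in>X. card {w\<in>U-D. (w,u')\<in>E})" by (rule sum_mono) (rule a)
    also have "\<dots> = card (E \<inter> ((U - D) \<times> X))" using fin by (simp add: card_pairs_right)
    finally show ?thesis .
  qed
  have cb: "(s - 1) * card D \<le> card (E \<inter> (D \<times> U))"
  proof -
    have "(s - 1) * card D = (\<Sum>w\<in>D. s - 1)" by simp
    also have "\<dots> \<le> (\<Sum>w\<in>D. card {u'\<in>U. (w,u')\<in>E})"
    proof (rule sum_mono)
      fix w assume "w \<in> D"
      then have "w < n" unfolding D_def U_def by auto
      then have "s - 1 \<le> deg_left n E w" using all_deg[OF sat st] st tn by simp
      then show "s - 1 \<le> card {u'\<in>U. (w,u')\<in>E}" unfolding deg_left_def U_def .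
    qed
    also have "\<dots> = card (E \<inter> (D \<times> U))" using fin by (simp add: card_pairs_left)
    finally show ?thesis .
  qed
  have cc: "(s - 1) * card (U - D) \<le> card (E \<inter> ((U - D) \<times> Nv))"
  proof -
    have "(s - 1) * card (U - D) = (\<Sum>w\<in>U - D. s - 1)" by simp
    also have "\<dots> \<le> (\<Sum>w\<in>U - D. f w)"
      by (rule sum_mono) (auto simp: D_def)
    also have "\<dots> = card (E \<inter> ((U - D) \<times> Nv))" using fin by (simp add: card_pairs_left f_def)
    finally show ?thesis .
  qed
  have DU: "D \<subseteq> U" unfolding D_def by auto
  have "card D + card (U - D) = n" using DU fin
    by (metis U_def card_atLeastLessThan card_Diff_subset card_mono diff_zero le_add_diff_inverse finite_subset)
  then have "(s - 1) * card D + (s - 1) * card (U - D) = (s - 1) * n"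
    by (metis add_mult_distrib2)
  then have E1: "(t - 1) * card X + (s - 1) * n \<le> card E" using ca cb cc cE by linarith
  have dle: "card Nv \<le> t - 2" using dNv dv by simp
  have "(t - 1) * (n - (t - 2)) \<le> (t - 1) * card X" using cX dle
    by (intro mult_left_mono) auto
  moreover have "(t - 1) * (n - (t - 2)) + (t - 1) * (t - 2) = (t - 1) * n"
    using tn by (metis add_mult_distrib2 le_add_diff_inverse2 diff_le_self le_trans)
  moreover have "(s + t - 2) * n = (t - 1) * n + (s - 1) * n"
  proof -
    have "s + t - 2 = (t - 1) + (s - 1)" using s1 st by simp
    then show ?thesis by (metis add_mult_distrib)
  qed
  ultimately show ?thesis using E1 by linarith
qed

lemma conv_contains: "contains_Kst n s t (F\<inverse>) \<Longrightarrow> contains_Kst n s t F"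
  unfolding contains_Kst_def by blast

lemma conv_sat:
  assumes "Kst_saturated n s t E" shows "Kst_saturated n s t (E\<inverse>)"
proof -
  have "insert (u, u') (E\<inverse>) = (insert (u', u) E)\<inverse>" for u u' by auto
  moreover have "contains_Kst n s t (F\<inverse>)" if "contains_Kst n s t F" for F
    using that unfolding contains_Kst_def by blast
  note ins = calculation
  have c2: "contains_Kst n s t (F\<inverse>)" if "contains_Kst n s t F" for F
    using that unfolding contains_Kst_def by blast
  have "E\<inverse> \<subseteq> {0..<n} \<times> {0..<n}" using assms unfolding Kst_saturated_def bip_graph_def by auto
  moreover have "\<not> contains_Kst n s t (E\<inverse>)" using assms conv_contains unfolding Kst_saturated_def by blast
  moreover have "contains_Kst n s t (insert (u, u') (E\<inverse>))"
    if "u \<in> {0..<n}" "u' \<in> {0..<n}" "(u, u') \<notin> E\<inverse>" for u u'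
  proof -
    have "contains_Kst n s t (insert (u', u) E)" using assms that unfolding Kst_saturated_def by auto
    then have "contains_Kst n s t ((insert (u', u) E)\<inverse>)" by (rule c2)
    then show ?thesis by (simp only: ins)
  qed
  ultimately show ?thesis unfolding Kst_saturated_def bip_graph_def by blast
qed

theorem proposition2p1:
  fixes s t :: nat
  assumes "1 \<le> s" and "s < t"
  shows "\<exists>N. \<forall>n \<ge> N. \<forall>E. Kst_saturated n s t E \<and> min_degree n E < t - 1 \<longrightarrow>
           int (card E) \<ge> int (s + t - 2) * int n - int (t - 1) * int (t - 2)"
proof (intro exI allI impI)
  fix n :: nat and E
  assume tn: "t \<le> n" and h: "Kst_saturated n s t E \<and> min_degree n E < t - 1"
  have ne: "deg_left n E ` {0..<n} \<union> deg_right n E ` {0..<n} \<noteq> {}" using tn assms by auto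
  have "min_degree n E \<in> deg_left n E ` {0..<n} \<union> deg_right n E ` {0..<n}"
    unfolding min_degree_def using ne by (intro Min_in) auto
  then obtain v where v: "v < n" "deg_left n E v < t - 1 \<or> deg_right n E v < t - 1" using h by auto
  have "(s + t - 2) * n \<le> card E + (t - 1) * (t - 2)"
  proof (cases "deg_left n E v < t - 1")
    case True
    then show ?thesis using main_left[of n s t E v] h assms v tn by simp
  next
    case False
    then have d: "deg_right n E v < t - 1" using v by auto
    have "deg_right n E v = deg_left n (E\<inverse>) v" unfolding deg_right_def deg_left_def by simp
    then show ?thesis using main_left[of n s t "E\<inverse>" v] conv_sat h assms v tn d
      by (simp add: card_inverse)
  qed
  then have "int ((s + t - 2) * n) \<le> int (card E) + int ((t - 1) * (t - 2))" by linarith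
  then show "int (card E) \<ge> int (s + t - 2) * int n - int (t - 1) * int (t - 2)" by simp
qed

end
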